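(* Let $A=\{a_1,\ldots,a_k\}$ be a multiset of $k$ nonnegative integers (not necessarily distinct). If a tree $T$ has order at most $\sum_{i=1}^k a_i+\max\{a_i : 1\le i\le k\}-1$, then $T$ is $A$-burnable.
   Context: For a vertex $u$ of a graph and an integer $m$, $N_m[u]$ denotes the set of vertices at distance at most $m$ from $u$ (so $N_m[u]=\emptyset$ if $m<0$). For a multiset $A$ of integers $a_1,\ldots,a_k$, a graph $G$ is called $A$-burnable if there exist $k$ vertices $v_1,\ldots,v_k$ of $G$ (not necessarily distinct) such that $V(G)\subseteq\bigcup_{i=1}^k N_{a_i-1}[v_i]$. The order of a graph is its number of vertices. *)

theory Defs
  imports Main "HOL-Library.Multiset"
begin

definition simple_graph :: "'a set \<Rightarrow> ('a \<Rightarrow> 'a \<Rightarrow> bool) \<Rightarrow> bool" where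
  "simple_graph V E \<longleftrightarrow> finite V \<and> (\<forall>u v. E u v \<longrightarrow> u \<in> V \<and> v \<in> V)
     \<and> (\<forall>u v. E u v \<longrightarrow> E v u) \<and> (\<forall>u. \<not> E u u)"

definition walk :: "('a \<Rightarrow> 'a \<Rightarrow> bool) \<Rightarrow> 'a list \<Rightarrow> bool" where
  "walk E xs \<longleftrightarrow> xs \<noteq> [] \<and> (\<forall>i. Suc i < length xs \<longrightarrow> E (xs ! i) (xs ! Suc i))"

definition connected_graph :: "'a set \<Rightarrow> ('a \<Rightarrow> 'a \<Rightarrow> bool) \<Rightarrow> bool" where
  "connected_graph V E \<longleftrightarrow> (\<forall>u\<in>V. \<forall>v\<in>V. \<exists>xs. walk E xs \<and> hd xs = u \<and> last xs = v)"

definition is_cycle :: "('a \<Rightarrow> 'a \<Rightarrow> bool) \<Rightarrow> 'a list \<Rightarrow> bool" where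
  "is_cycle E cs \<longleftrightarrow> length cs \<ge> 3 \<and> distinct cs \<and> walk E cs \<and> E (last cs) (hd cs)"

definition tree :: "'a set \<Rightarrow> ('a \<Rightarrow> 'a \<Rightarrow> bool) \<Rightarrow> bool" where
  "tree V E \<longleftrightarrow> simple_graph V E \<and> V \<noteq> {} \<and> connected_graph V E \<and> (\<nexists>cs. is_cycle E cs)"

text \<open>N_m[u]: vertices at distance at most m from u (empty if m < 0).
  dist(u,v) \<le> m iff there is a walk from u to v with at most m edges.\<close>
definition closed_nbhd :: "'a set \<Rightarrow> ('a \<Rightarrow> 'a \<Rightarrow> bool) \<Rightarrow> int \<Rightarrow> 'a \<Rightarrow> 'a set" where
  "closed_nbhd V E m u = {v \<in> V. 0 \<le> m \<and> u \<in> V \<and>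
      (\<exists>xs. walk E xs \<and> hd xs = u \<and> last xs = v \<and> int (length xs) \<le> m + 1)}"

text \<open>A-burnable for a multiset A = {a_1,...,a_k}: there is an assignment of a vertex
  to each element of A (given as a list enumerating the multiset).\<close>
definition burnable :: "'a set \<Rightarrow> ('a \<Rightarrow> 'a \<Rightarrow> bool) \<Rightarrow> nat multiset \<Rightarrow> bool" where
  "burnable V E A \<longleftrightarrow> (\<exists>as vs. mset as = A \<and> length vs = length as \<and> set vs \<subseteq> V \<and>
      V \<subseteq> (\<Union>i<length as. closed_nbhd V E (int (as ! i) - 1) (vs ! i)))"

end

theory Submission
  imports Defs
begin


definition wk :: "('a \<Rightarrow> 'a \<Rightarrow> bool) \<Rightarrow> 'a \<Rightarrow> 'a \<Rightarrow> nat \<Rightarrow> bool" where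
  "wk E u v n \<longleftrightarrow> (\<exists>xs. walk E xs \<and> hd xs = u \<and> last xs = v \<and> length xs = Suc n)"

lemma walk_Cons: "walk E (x # xs) \<longleftrightarrow> (xs = [] \<or> (E x (hd xs) \<and> walk E xs))"
proof (cases xs)
  case Nil then show ?thesis by (simp add: walk_def)
next
  case (Cons y ys)
  show ?thesis
  proof
    assume w: "walk E (x # xs)"
    have "E x y" using w Cons unfolding walk_def by (metis length_Cons nth_Cons_0 nth_Cons_Suc zero_less_Suc Suc_less_eq)
    moreover have "walk E xs" using w Cons unfolding walk_def
      by (metis Suc_less_eq length_Cons list.distinct(1) nth_Cons_Suc)
    ultimately show "xs = [] \<or> (E x (hd xs) \<and> walk E xs)" using Cons by simp
  next
    assume "xs = [] \<or> (E x (hd xs) \<and> walk E xs)"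
    then have h: "E x y" "walk E xs" using Cons by auto
    show "walk E (x # xs)" unfolding walk_def
    proof (intro conjI allI impI)
      fix i assume "Suc i < length (x # xs)"
      then show "E ((x # xs) ! i) ((x # xs) ! Suc i)"
        using h Cons unfolding walk_def by (cases i) auto
    qed simp
  qed
qed

lemma wk_0[simp]: "wk E u v 0 \<longleftrightarrow> u = v"
  unfolding wk_def
proof
  assume "\<exists>xs. walk E xs \<and> hd xs = u \<and> last xs = v \<and> length xs = Suc 0"
  then show "u = v" by (auto simp: length_Suc_conv)
next
  assume "u = v" then show "\<exists>xs. walk E xs \<and> hd xs = u \<and> last xs = v \<and> length xs = Suc 0"
    by (intro exI[of _ "[u]"]) (simp add: walk_def)
qed

lemma wk_Suc: "wk E u v (Suc n) \<longleftrightarrow> (\<exists>w. E u w \<and> wk E w v n)"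
proof
  assume "wk E u v (Suc n)"
  then obtain xs where xs: "walk E xs" "hd xs = u" "last xs = v" "length xs = Suc (Suc n)"
    unfolding wk_def by blast
  then obtain ys where ys: "xs = u # ys" "length ys = Suc n" by (auto simp: length_Suc_conv)
  then have "ys \<noteq> []" by auto
  have "walk E (u # ys)" using xs ys by simp
  then have "E u (hd ys)" "walk E ys" using \<open>ys \<noteq> []\<close> by (auto simp: walk_Cons)
  moreover have "last ys = v" using xs ys \<open>ys \<noteq> []\<close> by simp
  ultimately show "\<exists>w. E u w \<and> wk E w v n" unfolding wk_def using ys by blast
next
  assume "\<exists>w. E u w \<and> wk E w v n"
  then obtain w ys where "E u w" "walk E ys" "hd ys = w" "last ys = v" "length ys = Suc n"
    unfolding wk_def by blast
  then show "wk E u v (Suc n)" unfolding wk_def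
    by (intro exI[of _ "u # ys"]) (auto simp: walk_Cons)
qed

lemma wk_trans: "wk E u v n \<Longrightarrow> wk E v w m \<Longrightarrow> wk E u w (n + m)"
  by (induction n arbitrary: u) (auto simp: wk_Suc)

lemma wk_split: "wk E u w (n + m) \<Longrightarrow> \<exists>v. wk E u v n \<and> wk E v w m"
proof (induction n arbitrary: u)
  case (Suc n)
  then obtain x where "E u x" "wk E x w (n + m)" by (auto simp: wk_Suc)
  with Suc.IH obtain v where "wk E x v n" "wk E v w m" by blast
  then show ?case using \<open>E u x\<close> by (auto simp: wk_Suc)
qed simp

lemma wk_sym: assumes "\<forall>a b. E a b \<longrightarrow> E b a" shows "wk E u v n \<Longrightarrow> wk E v u n"
proof (induction n arbitrary: u)
  case (Suc n)
  then obtain w where "E u w" "wk E w v n" by (auto simp: wk_Suc)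
  then have "wk E v w n" "wk E w u 1" using Suc assms by (auto simp: wk_Suc)
  then show ?case using wk_trans by fastforce
qed simp

lemma wk_mono: "(\<And>a b. E a b \<Longrightarrow> E' a b) \<Longrightarrow> wk E u v n \<Longrightarrow> wk E' u v n"
  by (induction n arbitrary: u) (auto simp: wk_Suc)

lemma wk_in: "\<forall>a b. E a b \<longrightarrow> a \<in> V \<and> b \<in> V \<Longrightarrow> u \<in> V \<Longrightarrow> wk E u v n \<Longrightarrow> v \<in> V"
  by (induction n arbitrary: u) (auto simp: wk_Suc)


definition gd :: "('a \<Rightarrow> 'a \<Rightarrow> bool) \<Rightarrow> 'a \<Rightarrow> 'a \<Rightarrow> nat" where
  "gd E u v = (LEAST n. wk E u v n)"

lemma gd_le: "wk E u v n \<Longrightarrow> gd E u v \<le> n"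
  unfolding gd_def by (rule Least_le)

lemma gd_wk: "wk E u v n \<Longrightarrow> wk E u v (gd E u v)"
  unfolding gd_def by (rule LeastI)

lemma gd_tri: assumes h1: "wk E u v n" and h2: "wk E v w m" shows "gd E u w \<le> gd E u v + gd E v w"
proof -
  have "wk E u w (gd E u v + gd E v w)" by (rule wk_trans[OF gd_wk[OF h1] gd_wk[OF h2]])
  then show ?thesis by (rule gd_le)
qed

lemma gd_sym: assumes sy: "\<forall>a b. E a b \<longrightarrow> E b a" and h: "wk E u v n" shows "gd E v u = gd E u v"
proof -
  have h1: "wk E v u (gd E u v)" by (rule wk_sym[OF sy gd_wk[OF h]])
  have h2: "wk E u v (gd E v u)" by (rule wk_sym[OF sy gd_wk[OF h1]])
  show ?thesis using gd_le[OF h1] gd_le[OF h2] by simp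
qed

lemma gd_mid:
  assumes "wk E u w n" "i \<le> gd E u w"
  shows "\<exists>v. wk E u v i \<and> wk E v w (gd E u w - i) \<and> gd E u v = i \<and> gd E v w = gd E u w - i"
proof -
  have "wk E u w (i + (gd E u w - i))" using gd_wk[OF assms(1)] assms(2) by simp
  then obtain v where v: "wk E u v i" "wk E v w (gd E u w - i)" using wk_split by metis
  have "gd E u w \<le> gd E u v + gd E v w" by (rule gd_tri[OF v])
  moreover have "gd E u v \<le> i" "gd E v w \<le> gd E u w - i" using gd_le[OF v(1)] gd_le[OF v(2)] by auto
  ultimately have "gd E u v = i" "gd E v w = gd E u w - i" using assms(2) by linarith+
  then show ?thesis using v by blast
qed

definition gr :: "'a set \<Rightarrow> ('a \<Rightarrow> 'a \<Rightarrow> bool) \<Rightarrow> bool" where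
  "gr V E \<longleftrightarrow> finite V \<and> (\<forall>u v. E u v \<longrightarrow> u \<in> V \<and> v \<in> V) \<and> (\<forall>u v. E u v \<longrightarrow> E v u)
     \<and> (\<forall>u\<in>V. \<forall>v\<in>V. \<exists>n. wk E u v n)"

definition restr :: "('a \<Rightarrow> 'a \<Rightarrow> bool) \<Rightarrow> 'a set \<Rightarrow> 'a \<Rightarrow> 'a \<Rightarrow> bool" where
  "restr E R = (\<lambda>u w. E u w \<and> u \<in> R \<and> w \<in> R)"

lemma gr_wk: assumes "gr V E" "u \<in> V" "v \<in> V" shows "wk E u v (gd E u v)"
proof -
  obtain n where "wk E u v n" using assms unfolding gr_def by blast
  then show ?thesis by (rule gd_wk)
qed

lemma short:
  assumes "finite R" "\<forall>a b. E a b \<longrightarrow> a \<in> R \<and> b \<in> R" "u \<in> R" "wk E u w n"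
  shows "\<exists>m<card R. wk E u w m"
proof -
  define n0 where "n0 = gd E u w"
  have w0: "wk E u w n0" unfolding n0_def by (rule gd_wk[OF assms(4)])
  have "n0 < card R"
  proof (rule ccontr)
    assume "\<not> n0 < card R"
    define f where "f i = (SOME z. wk E u z i \<and> wk E z w (n0 - i))" for i
    have f: "wk E u (f i) i \<and> wk E (f i) w (n0 - i)" if "i \<le> n0" for i
    proof -
      have "wk E u w (i + (n0 - i))" using w0 that by simp
      then have "\<exists>z. wk E u z i \<and> wk E z w (n0 - i)" by (rule wk_split)
      then show ?thesis unfolding f_def by (rule someI_ex)
    qed
    have sub: "f ` {0..n0} \<subseteq> R"
    proof (rule image_subsetI)
      fix i assume "i \<in> {0..n0}"
      then have "wk E u (f i) i" using f[of i] by auto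
      then show "f i \<in> R" by (rule wk_in[OF assms(2) assms(3)])
    qed
    have "\<not> inj_on f {0..n0}"
    proof
      assume "inj_on f {0..n0}"
      then have "card {0..n0} \<le> card R" using card_inj_on_le[OF _ sub assms(1)] by blast
      then show False using \<open>\<not> n0 < card R\<close> by simp
    qed
    then obtain i j where ij: "i \<le> n0" "j \<le> n0" "i \<noteq> j" "f i = f j"
      unfolding inj_on_def by auto
    have key: "False" if "i < j" "i \<le> n0" "j \<le> n0" "f i = f j" for i j
    proof -
      have q1: "wk E u (f j) i" using f[OF that(2)] that(4) by simp
      have q2: "wk E (f j) w (n0 - j)" using f[OF that(3)] by blast
      have "wk E u w (i + (n0 - j))" by (rule wk_trans[OF q1 q2])
      then have "n0 \<le> i + (n0 - j)" unfolding n0_def by (rule gd_le)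
      then show False using that by linarith
    qed
    show False
    proof (cases "i < j")
      case True show False by (rule key[OF True ij(1) ij(2) ij(4)])
    next
      case False then have "j < i" using ij(3) by simp
      show False by (rule key[OF \<open>j < i\<close> ij(2) ij(1) ij(4)[symmetric]])
    qed
  qed
  then show ?thesis using w0 by blast
qed


lemma gr_tri: "gr V E \<Longrightarrow> u \<in> V \<Longrightarrow> w \<in> V \<Longrightarrow> z \<in> V \<Longrightarrow> gd E u z \<le> gd E u w + gd E w z"
  by (rule gd_tri[OF gr_wk gr_wk])

lemma gr_sym: assumes "gr V E" "u \<in> V" "w \<in> V" shows "gd E u w = gd E w u"
proof -
  have "\<forall>a b. E a b \<longrightarrow> E b a" using assms(1) unfolding gr_def by blast
  from gd_sym[OF this gr_wk[OF assms]] show ?thesis by simp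
qed

lemma gd_self: "gd E r r = 0"
  using gd_le[of E r r 0] by simp

lemma peel:
  assumes G: "gr V E" and r: "r \<in> V" and x: "x \<in> V"
    and mx: "\<forall>y\<in>V. gd E r y \<le> gd E r x" and a1: "1 \<le> a" and aD: "a \<le> gd E r x"
  obtains v S p where "v \<in> V" "S \<subseteq> V" "a \<le> card S" "r \<notin> S"
    "\<forall>y\<in>S. gd E v y \<le> a - 1"
    "p \<in> V" "p \<notin> S" "E p v" "gr (V - S) (restr E (V - S))"
proof -
  from G have fin: "finite V" and ed: "\<forall>u v. E u v \<longrightarrow> u \<in> V \<and> v \<in> V"
    and sy: "\<forall>u v. E u v \<longrightarrow> E v u"
    unfolding gr_def by auto
  define D where "D = gd E r x"
  define c where "c = D - a + 1"
  have c1: "1 \<le> c" "c \<le> D" "D = c + (a - 1)" using aD a1 unfolding c_def D_def by auto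
  have wrx: "wk E r x (gd E r x)" using gr_wk[OF G r x] .
  obtain v where v: "wk E r v c" "wk E v x (D - c)" "gd E r v = c" "gd E v x = D - c"
    using gd_mid[OF wrx, of c] c1 unfolding D_def by auto
  have Dc: "D - c = a - 1" using c1 by simp
  have vV: "v \<in> V" using wk_in[OF ed r v(1)] .
  define S where "S = {y\<in>V. gd E v y \<le> a - 1 \<and> gd E r y = c + gd E v y}"
  have SV: "S \<subseteq> V" unfolding S_def by auto
  have "\<forall>t. \<exists>w. t \<le> a - 1 \<longrightarrow> (wk E v w t \<and> gd E v w = t \<and> gd E w x = a - 1 - t)"
  proof
    fix t
    show "\<exists>w. t \<le> a - 1 \<longrightarrow> (wk E v w t \<and> gd E v w = t \<and> gd E w x = a - 1 - t)"
    proof (cases "t \<le> a - 1")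
      case True
      then have "t \<le> gd E v x" using v Dc by simp
      from gd_mid[OF v(2) this] obtain w where "wk E v w t" "gd E v w = t" "gd E w x = gd E v x - t"
        by blast
      then show ?thesis using v Dc by auto
    qed simp
  qed
  then have "\<exists>f. \<forall>t. t \<le> a - 1 \<longrightarrow> (wk E v (f t) t \<and> gd E v (f t) = t \<and> gd E (f t) x = a - 1 - t)"
    by (rule choice)
  then obtain f where f0: "\<forall>t. t \<le> a - 1 \<longrightarrow> (wk E v (f t) t \<and> gd E v (f t) = t \<and> gd E (f t) x = a - 1 - t)"
    by (elim exE)
  have f: "wk E v (f t) t \<and> gd E v (f t) = t \<and> gd E (f t) x = a - 1 - t" if "t \<le> a - 1" for t
    using f0 that by blast
  have fS: "f t \<in> S" if t: "t \<le> a - 1" for t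
  proof -
    have fV: "f t \<in> V" using wk_in[OF ed vV] f[OF t] by blast
    have "gd E r (f t) \<le> gd E r v + gd E v (f t)" using gr_tri[OF G r vV fV] .
    moreover have "gd E r x \<le> gd E r (f t) + gd E (f t) x" using gr_tri[OF G r fV x] .
    ultimately have "gd E r (f t) = c + t" using f[OF t] v(3) c1 t unfolding D_def by linarith
    then show ?thesis unfolding S_def using fV f[OF t] t by auto
  qed
  have "inj_on f {0..<a}"
  proof (rule inj_onI)
    fix s t assume "s \<in> {0..<a}" "t \<in> {0..<a}" "f s = f t"
    then have st: "s \<le> a - 1" "t \<le> a - 1" "f s = f t" by auto
    have "s = gd E v (f s)" using f[OF st(1)] by simp
    also have "\<dots> = gd E v (f t)" using st(3) by simp
    also have "\<dots> = t" using f[OF st(2)] by simp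
    finally show "s = t" .
  qed
  moreover have "f ` {0..<a} \<subseteq> S" using fS a1 by auto
  ultimately have cardS: "a \<le> card S"
    using card_inj_on_le[of f "{0..<a}" S] finite_subset[OF SV fin] by simp
  have rS: "r \<notin> S" unfolding S_def using gd_self[of E r] c1 by auto
  obtain p where p: "wk E r p (c - 1)" "wk E p v (c - (c - 1))" "gd E r p = c - 1"
    using gd_mid[OF v(1), of "c - 1"] v(3) by auto
  have "c - (c - 1) = Suc 0" using c1 by simp
  then have Epv: "E p v" using p(2) by (simp add: wk_Suc)
  have pV: "p \<in> V" using wk_in[OF ed r p(1)] .
  have pS: "p \<notin> S" unfolding S_def using p(3) c1 by auto
  have vb: "\<forall>y\<in>S. gd E v y \<le> a - 1" unfolding S_def by auto
  define E' where "E' = restr E (V - S)"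
  have sy': "\<forall>u w. E' u w \<longrightarrow> E' w u" unfolding E'_def restr_def using sy by auto
  have claim: "\<forall>y. y \<in> V - S \<longrightarrow> gd E r y = n \<longrightarrow> wk E' y r n" for n
  proof (induction n)
    case 0
    show ?case
    proof (intro allI impI)
      fix y assume y: "y \<in> V - S" "gd E r y = 0"
      then have "wk E r y 0" using gr_wk[OF G r, of y] by auto
      then show "wk E' y r 0" by simp
    qed
  next
    case (Suc n)
    show ?case
    proof (intro allI impI)
      fix y assume y: "y \<in> V - S" "gd E r y = Suc n"
      have yV: "y \<in> V" using y by auto
      have "wk E y r (Suc n)" using wk_sym[OF sy gr_wk[OF G r yV]] y by simp
      then obtain w where w: "E y w" "wk E w r n" by (auto simp: wk_Suc)
      have wV: "w \<in> V" using ed w(1) by blast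
      have "wk E r w n" using wk_sym[OF sy w(2)] .
      then have g1: "gd E r w \<le> n" by (rule gd_le)
      have h1: "wk E w y (Suc 0)" using sy w(1) by (simp add: wk_Suc)
      have g2: "gd E w y \<le> 1" using gd_le[OF h1] by simp
      have "gd E r y \<le> gd E r w + gd E w y" using gr_tri[OF G r wV yV] .
      then have grw: "gd E r w = n" using g1 g2 y by linarith
      have wS: "w \<notin> S"
      proof
        assume "w \<in> S"
        then have ws: "gd E v w \<le> a - 1" "gd E r w = c + gd E v w" unfolding S_def by auto
        have "gd E v y \<le> gd E v w + gd E w y" using gr_tri[OF G vV wV yV] .
        moreover have "gd E r y \<le> gd E r v + gd E v y" using gr_tri[OF G r vV yV] .
        moreover have "gd E r y \<le> D" using mx yV unfolding D_def by blast
        ultimately have "gd E v y \<le> a - 1" "gd E r y = c + gd E v y"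
          using ws grw g2 y v(3) c1 by linarith+
        then have "y \<in> S" unfolding S_def using yV by auto
        then show False using y by auto
      qed
      have "wk E' w r n" using Suc wV wS grw by blast
      moreover have "E' y w" unfolding E'_def restr_def using w(1) y wV wS by auto
      ultimately show "wk E' y r (Suc n)" by (auto simp: wk_Suc)
    qed
  qed
  have "gr (V - S) E'"
    unfolding gr_def
  proof (intro conjI ballI)
    show "finite (V - S)" using fin by simp
    show "\<forall>u v. E' u v \<longrightarrow> u \<in> V - S \<and> v \<in> V - S" unfolding E'_def restr_def by auto
    show "\<forall>u v. E' u v \<longrightarrow> E' v u" using sy' .
    fix u w assume u: "u \<in> V - S" and w: "w \<in> V - S"
    have c1': "wk E' u r (gd E r u)" using claim[of "gd E r u"] u by blast
    have "wk E' w r (gd E r w)" using claim[of "gd E r w"] w by blast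
    then have "wk E' r w (gd E r w)" by (rule wk_sym[OF sy'])
    with c1' have "wk E' u w (gd E r u + gd E r w)" by (rule wk_trans)
    then show "\<exists>n. wk E' u w n" by blast
  qed
  then show ?thesis using that[OF vV SV cardS rS vb pV pS Epv] unfolding E'_def by blast
qed


lemma ball_in: "u \<in> V \<Longrightarrow> y \<in> V \<Longrightarrow> wk E u y n \<Longrightarrow> n + 1 \<le> a \<Longrightarrow> y \<in> closed_nbhd V E (int a - 1) u"
  unfolding closed_nbhd_def wk_def by auto

lemma nbhd_mono:
  assumes "V' \<subseteq> V" "\<And>u w. E' u w \<Longrightarrow> E u w"
  shows "closed_nbhd V' E' m u \<subseteq> closed_nbhd V E m u"
proof -
  have "walk E' xs \<Longrightarrow> walk E xs" for xs unfolding walk_def using assms(2) by blast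
  then show ?thesis unfolding closed_nbhd_def using assms(1) by blast
qed

lemma cover_all:
  assumes "a \<in># A" "v \<in> V" "V \<subseteq> closed_nbhd V E (int a - 1) v"
  shows "burnable V E A"
proof -
  obtain xs where xs: "mset xs = A - {#a#}" using ex_mset by blast
  let ?as = "a # xs" and ?vs = "replicate (length (a # xs)) v"
  have "mset ?as = A" using xs assms(1) by simp
  moreover have "V \<subseteq> (\<Union>i<length ?as. closed_nbhd V E (int (?as ! i) - 1) (?vs ! i))"
    using assms(3) by fastforce
  ultimately show ?thesis unfolding burnable_def using assms(2)
    by (intro exI[of _ ?as] exI[of _ ?vs]) auto
qed

lemma extend:
  assumes b: "burnable V' E' B" and VV: "V' \<subseteq> V" and EE: "\<And>u w. E' u w \<Longrightarrow> E u w"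
    and v: "v \<in> V" and cov: "V - V' \<subseteq> closed_nbhd V E (int a - 1) v"
  shows "burnable V E (add_mset a B)"
proof -
  obtain as vs where h: "mset as = B" "length vs = length as" "set vs \<subseteq> V'"
    "V' \<subseteq> (\<Union>i<length as. closed_nbhd V' E' (int (as ! i) - 1) (vs ! i))"
    using b unfolding burnable_def by blast
  have "V \<subseteq> (\<Union>i<length (a # as). closed_nbhd V E (int ((a # as) ! i) - 1) ((v # vs) ! i))"
  proof
    fix y assume y: "y \<in> V"
    show "y \<in> (\<Union>i<length (a # as). closed_nbhd V E (int ((a # as) ! i) - 1) ((v # vs) ! i))"
    proof (cases "y \<in> V'")
      case True
      then obtain i where i: "i < length as" "y \<in> closed_nbhd V' E' (int (as ! i) - 1) (vs ! i)"
        using h(4) by blast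
      then have "y \<in> closed_nbhd V E (int ((a # as) ! Suc i) - 1) ((v # vs) ! Suc i)"
        using nbhd_mono[OF VV, of E' E "int (as ! i) - 1" "vs ! i"] EE by auto
      then show ?thesis using i(1) by (intro UN_I[of "Suc i"]) auto
    next
      case False
      then have "y \<in> closed_nbhd V E (int ((a # as) ! 0) - 1) ((v # vs) ! 0)" using cov y by auto
      then show ?thesis by (intro UN_I[of 0]) auto
    qed
  qed
  then show ?thesis unfolding burnable_def using h VV v
    by (intro exI[of _ "a # as"] exI[of _ "v # vs"]) auto
qed

lemma main:
  "size A = k \<Longrightarrow> gr V E \<Longrightarrow> V \<noteq> {} \<Longrightarrow> A \<noteq> {#} \<Longrightarrow>
   card V + 1 \<le> sum_mset A + Max (set_mset A) \<Longrightarrow> burnable V E A"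
proof (induction k arbitrary: A V E rule: less_induct)
  case (less k A V E)
  note G = less.prems(2)
  from G have fin: "finite V" and ed: "\<forall>u v. E u v \<longrightarrow> u \<in> V \<and> v \<in> V"
    and sy: "\<forall>u v. E u v \<longrightarrow> E v u"
    unfolding gr_def by auto
  define M where "M = Max (set_mset A)"
  have MA: "M \<in># A" unfolding M_def using less.prems(4) by (simp add: Max_in)
  have Mge: "b \<le> M" if "b \<in># A" for b unfolding M_def using that by simp
  obtain r where r: "r \<in> V" using less.prems(3) by blast
  have M1: "1 \<le> M"
  proof (rule ccontr)
    assume "\<not> 1 \<le> M"
    then have "\<forall>x\<in>set_mset A. x = 0" using Mge by (metis less_one not_le le_less_trans)
    then have "sum_mset A = 0" by simp
    moreover have "card V + 1 \<le> sum_mset A + M" using less.prems(5) unfolding M_def .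
    ultimately show False using \<open>\<not> 1 \<le> M\<close> by linarith
  qed
  show ?case
  proof (cases "\<forall>y\<in>V. gd E r y \<le> M - 1")
    case True
    have "V \<subseteq> closed_nbhd V E (int M - 1) r"
    proof
      fix y assume y: "y \<in> V"
      show "y \<in> closed_nbhd V E (int M - 1) r"
      proof (rule ball_in[OF r y gr_wk[OF G r y]])
        have "gd E r y \<le> M - 1" using True y by blast
        then show "gd E r y + 1 \<le> M" using M1 by linarith
      qed
    qed
    then show ?thesis using cover_all[OF MA r] by blast
  next
    case False
    then obtain y0 where y0': "y0 \<in> V" "\<not> gd E r y0 \<le> M - 1" by blast
    then have y0: "y0 \<in> V" "M \<le> gd E r y0" by linarith+
    define D where "D = Max (gd E r ` V)"
    have "D \<in> gd E r ` V" unfolding D_def using fin less.prems(3) by (simp add: Max_in)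
    then obtain x where x: "x \<in> V" "gd E r x = D" by blast
    have mx: "\<forall>y\<in>V. gd E r y \<le> gd E r x"
    proof
      fix y assume "y \<in> V"
      then have "gd E r y \<le> Max (gd E r ` V)" using fin by (intro Max_ge) auto
      then show "gd E r y \<le> gd E r x" using x(2) D_def by simp
    qed
    have "gd E r y0 \<le> gd E r x" using mx y0(1) by blast
    then have MD: "M \<le> gd E r x" using y0(2) by linarith
    show ?thesis
    proof (cases "size A = 1")
      case True
      then obtain b where "A = {#b#}" using size_1_singleton_mset by blast
      then have A1: "A = {#M#}" using MA by simp
      then have sA1: "sum_mset A = M" by simp
      have cV: "card V + 1 \<le> M + M" using less.prems(5)[folded M_def] sA1 by linarith
      obtain v S p where vS: "v \<in> V" "S \<subseteq> V" "M \<le> card S" "r \<notin> S"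
        "\<forall>y\<in>S. gd E v y \<le> M - 1"
        "p \<in> V" "p \<notin> S" "E p v" "gr (V - S) (restr E (V - S))"
        using peel[OF G r x(1) mx M1 MD] by blast
      have cR: "card (V - S) + 1 \<le> M"
        using card_Diff_subset[OF finite_subset[OF vS(2) fin] vS(2)] cV vS(3)
          card_mono[OF fin vS(2)] by linarith
      have "V \<subseteq> closed_nbhd V E (int M - 1) v"
      proof
        fix y assume y: "y \<in> V"
        show "y \<in> closed_nbhd V E (int M - 1) v"
        proof (cases "y \<in> S")
          case True
          have "gd E v y \<le> M - 1" using vS(5) True by blast
          then have "gd E v y + 1 \<le> M" using M1 by linarith
          then show ?thesis by (rule ball_in[OF vS(1) y gr_wk[OF G vS(1) y]])
        next
          case False
          let ?E' = "restr E (V - S)"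
          have yR: "y \<in> V - S" "p \<in> V - S" using y False vS by auto
          have "wk ?E' y p (gd ?E' y p)" using gr_wk[OF vS(9) yR] .
          moreover have "finite (V - S)" using fin by simp
          moreover have "\<forall>a b. ?E' a b \<longrightarrow> a \<in> V - S \<and> b \<in> V - S" unfolding restr_def by auto
          ultimately obtain m where m: "m < card (V - S)" "wk ?E' y p m"
            using short[of "V - S" ?E' y p] yR by blast
          have "wk E y p m" using wk_mono[OF _ m(2), of E] unfolding restr_def by blast
          moreover have "wk E p v (Suc 0)" using vS(8) by (simp add: wk_Suc)
          ultimately have "wk E y v (m + Suc 0)" by (rule wk_trans)
          then have "wk E v y (m + Suc 0)" by (rule wk_sym[OF sy])
          moreover have "m + Suc 0 + 1 \<le> M" using m(1) cR by linarith
          ultimately show ?thesis by (rule ball_in[OF vS(1) y])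
        qed
      qed
      then show ?thesis using cover_all[OF MA vS(1)] by blast
    next
      case False
      have "size (A - {#M#}) = size A - 1" using MA by (rule size_Diff_singleton)
      moreover have "size A \<noteq> 0" using less.prems(4) by simp
      ultimately have "size (A - {#M#}) \<noteq> 0" using False by linarith
      then have "A - {#M#} \<noteq> {#}" by (metis size_empty)
      then have "set_mset (A - {#M#}) \<noteq> {}" by simp
      then have "\<exists>a. a \<in> set_mset (A - {#M#})" by (rule ex_in_conv[THEN iffD2])
      then obtain a where a: "a \<in># A - {#M#}" by (rule exE)
      have aA: "a \<in># A" using a by (rule in_diffD)
      define B where "B = A - {#a#}"
      have AB: "A = add_mset a B" unfolding B_def using aA by simp
      have MB: "M \<in># B"
      proof (cases "a = M")
        case True then show ?thesis using a B_def by simp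
      next
        case False then show ?thesis unfolding B_def using MA by (simp add: in_diff_count)
      qed
      have MaxB: "Max (set_mset B) = M"
      proof (rule antisym)
        have "\<forall>b\<in>set_mset B. b \<le> M" using Mge AB by simp
        then show "Max (set_mset B) \<le> M" using MB by (subst Max_le_iff) auto
        show "M \<le> Max (set_mset B)" using MB by simp
      qed
      have sA: "sum_mset A = a + sum_mset B" using AB by simp
      have kB: "size B < k" using AB less.prems(1) by simp
      have Bne: "B \<noteq> {#}" using MB by auto
      have aM: "a \<le> M" using Mge aA .
      show ?thesis
      proof (cases "a = 0")
        case True
        have "burnable V E B"
        proof (rule less.IH[OF kB refl G less.prems(3) Bne])
          have "card V + 1 \<le> sum_mset A + M" using less.prems(5) unfolding M_def .
          then show "card V + 1 \<le> sum_mset B + Max (set_mset B)" using sA MaxB True by linarith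
        qed
        then have "burnable V E (add_mset a B)"
        proof (rule extend[OF _ subset_refl])
          show "\<And>u w. E u w \<Longrightarrow> E u w" .
          show "r \<in> V" by (rule r)
          show "V - V \<subseteq> closed_nbhd V E (int a - 1) r" by simp
        qed
        then show ?thesis using AB by simp
      next
        case False
        then have a1: "1 \<le> a" by simp
        have aMD: "a \<le> gd E r x" using aM MD by linarith
        obtain v S p where vS: "v \<in> V" "S \<subseteq> V" "a \<le> card S" "r \<notin> S"
          "\<forall>y\<in>S. gd E v y \<le> a - 1"
          "p \<in> V" "p \<notin> S" "E p v" "gr (V - S) (restr E (V - S))"
          using peel[OF G r x(1) mx a1 aMD] by blast
        have P5: "card V + 1 \<le> sum_mset A + M" using less.prems(5) unfolding M_def .
        have "card (V - S) = card V - card S" by (rule card_Diff_subset[OF finite_subset[OF vS(2) fin] vS(2)])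
        moreover have "card S \<le> card V" by (rule card_mono[OF fin vS(2)])
        ultimately have cR: "card (V - S) + 1 \<le> sum_mset B + Max (set_mset B)"
          using vS(3) P5 sA MaxB by linarith
        have Rne: "V - S \<noteq> {}" using r vS(4) by blast
        have "burnable (V - S) (restr E (V - S)) B"
          using less.IH[OF kB refl vS(9) Rne Bne cR] .
        moreover have "V - (V - S) \<subseteq> closed_nbhd V E (int a - 1) v"
        proof
          fix y assume "y \<in> V - (V - S)"
          then have y: "y \<in> V" "y \<in> S" using vS(2) by auto
          show "y \<in> closed_nbhd V E (int a - 1) v"
          proof (rule ball_in[OF vS(1) y(1) gr_wk[OF G vS(1) y(1)]])
            have "gd E v y \<le> a - 1" using vS(5) y(2) by blast
            then show "gd E v y + 1 \<le> a" using a1 by linarith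
          qed
        qed
        moreover have "V - S \<subseteq> V" by blast
        moreover have "\<And>u w. restr E (V - S) u w \<Longrightarrow> E u w" unfolding restr_def by blast
        ultimately have "burnable V E (add_mset a B)"
          using extend[of "V - S" "restr E (V - S)" B V E v a] vS(1) by blast
        then show ?thesis using AB by simp
      qed
    qed
  qed
qed


theorem lemma1:
  fixes V :: "'a set" and E :: "'a \<Rightarrow> 'a \<Rightarrow> bool" and A :: "nat multiset"
  assumes "A \<noteq> {#}"
    and "tree V E"
    and "int (card V) \<le> int (sum_mset A) + int (Max (set_mset A)) - 1"
  shows "burnable V E A"
proof -
  have sg: "simple_graph V E" and ne: "V \<noteq> {}" and cg: "connected_graph V E"
    using assms(2) unfolding tree_def by auto
  have G: "gr V E" unfolding gr_def
  proof (intro conjI ballI)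
    show "finite V" "\<forall>u v. E u v \<longrightarrow> u \<in> V \<and> v \<in> V" "\<forall>u v. E u v \<longrightarrow> E v u"
      using sg unfolding simple_graph_def by auto
    fix u v assume "u \<in> V" "v \<in> V"
    then obtain xs where xs: "walk E xs" "hd xs = u" "last xs = v"
      using cg unfolding connected_graph_def by blast
    have "xs \<noteq> []" using xs(1) unfolding walk_def by blast
    then have "length xs = Suc (length xs - 1)" by simp
    then have "wk E u v (length xs - 1)" unfolding wk_def using xs by blast
    then show "\<exists>n. wk E u v n" by blast
  qed
  have "card V + 1 \<le> sum_mset A + Max (set_mset A)" using assms(3) by linarith
  then show ?thesis by (rule main[OF refl G ne assms(1)])
qed

end
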